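(* In the flow-sampling problem with $M\ge1$ devices, accuracies $\varphi_i\in(0,1]$ and external sampling probabilities $p_i\in(0,1)$, fix an integer $G\ge1$ and let the largest-order-statistic policy be the policy that in every slot draws $G$ integers independently and uniformly from $\{1,\dots,M\}$ (with replacement, independently of the state and of the past) and samples the device indexed by the largest of them. Its average cost is $$J_{\mathrm{order}}=\sum_{i=1}^{M}\frac{\varphi_i(1-q_i)(1-p_i)}{1-(1-q_i)(1-p_i)},\qquad q_i=\frac{i^G-(i-1)^G}{M^G}.$$ Moreover, if $p_1=\dots=p_M=p\in(0,1)$ and $\varphi_i=\sigma^{M-i}$ with $\sigma\in(0,1)$, then for fixed $G$, $$\lim_{M\to\infty}J_{\mathrm{order}}=\frac{1-p}{(1-\sigma)p}.$$
   Context: Flow-sampling model: a flow path passes through $M$ devices indexed $1,\dots,M$. Time is slotted, $t=0,1,2,\dots$. Each device $i$ has an accuracy $\varphi_i$ and a counter $n_i^t\in\{0,1,2,\dots\}$, with $n_i^0=0$. At the start of each slot $t$ the controller chooses an action $a^t\in\{1,\dots,M\}$ (the device it samples) according to a policy. Independently of everything else, for each $i$ and $t$ an event $H_i^t$ occurs with probability $p_i$, independently across $i$ and $t$. Counter dynamics: if $a^t=i$ then $n_i^{t+1}=0$; if $a^t\ne i$ then $n_i^{t+1}=0$ if $H_i^t$ occurs and $n_i^{t+1}=n_i^t+1$ otherwise. The immediate cost is $C(s^t)=\sum_{i=1}^M\varphi_i n_i^t$ and the average cost of policy $\mu$ is $J_\mu=\lim_{T\to\infty}\mathbb{E}_\mu\left[\frac1T\sum_{t=0}^{T-1}C(s^t)\right]$.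 *)

theory Defs
  imports "HOL-Probability.Probability"
begin

text \<open>A state is a counter vector s :: nat => nat, where s i = n_i
  for devices i in {1..M} (and s i = 0 outside).\<close>

type_synonym fs_state = "nat \<Rightarrow> nat"

definition fs_next :: "nat \<Rightarrow> fs_state \<Rightarrow> nat \<Rightarrow> (nat \<Rightarrow> bool) \<Rightarrow> fs_state" where
  "fs_next M s a H = (\<lambda>i. if i \<in> {1..M} then
      (if a = i then 0 else if H i then 0 else s i + 1) else 0)"

primrec fs_state_dist ::
  "nat \<Rightarrow> (nat \<Rightarrow> real) \<Rightarrow> (fs_state \<Rightarrow> nat pmf) \<Rightarrow> nat \<Rightarrow> fs_state pmf" where
  "fs_state_dist M p mu 0 = return_pmf (\<lambda>_. 0)"
| "fs_state_dist M p mu (Suc t) =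
     do { s \<leftarrow> fs_state_dist M p mu t;
          a \<leftarrow> mu s;
          H \<leftarrow> Pi_pmf {1..M} False (\<lambda>i. bernoulli_pmf (p i));
          return_pmf (fs_next M s a H) }"

definition fs_cost :: "nat \<Rightarrow> (nat \<Rightarrow> real) \<Rightarrow> fs_state \<Rightarrow> real" where
  "fs_cost M phi s = (\<Sum>i=1..M. phi i * real (s i))"

definition fs_avg_cost ::
  "nat \<Rightarrow> (nat \<Rightarrow> real) \<Rightarrow> (nat \<Rightarrow> real) \<Rightarrow> (fs_state \<Rightarrow> nat pmf) \<Rightarrow> nat \<Rightarrow> real" where
  "fs_avg_cost M phi p mu T =
     (1 / real T) * (\<Sum>t<T. measure_pmf.expectation (fs_state_dist M p mu t) (fs_cost M phi))"

definition fs_J ::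
  "nat \<Rightarrow> (nat \<Rightarrow> real) \<Rightarrow> (nat \<Rightarrow> real) \<Rightarrow> (fs_state \<Rightarrow> nat pmf) \<Rightarrow> real" where
  "fs_J M phi p mu = lim (fs_avg_cost M phi p mu)"

definition order_policy :: "nat \<Rightarrow> nat \<Rightarrow> fs_state \<Rightarrow> nat pmf" where
  "order_policy M G = (\<lambda>_. map_pmf (\<lambda>xs. Max (set xs)) (replicate_pmf G (pmf_of_set {1..M})))"

end

theory Submission
  imports Defs
begin


lemma prob_all_le:
  assumes "k \<le> M" "M \<ge> 1"
  shows "emeasure (replicate_pmf n (pmf_of_set {1..M})) {xs. \<forall>x\<in>set xs. x \<le> k}
         = ennreal ((real k / real M)^n)"
proof (induction n)
  case 0
  then show ?case by simp
next
  case (Suc n)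
  let ?U = "pmf_of_set {1..M::nat}"
  let ?S = "{xs. \<forall>x\<in>set xs. x \<le> k}"
  have ne: "{1..M} \<noteq> {}" using assms by auto
  have "emeasure (replicate_pmf (Suc n) ?U) ?S =
        (\<integral>\<^sup>+x. (\<integral>\<^sup>+xs. indicator ?S (x#xs) \<partial>replicate_pmf n ?U) \<partial>?U)"
    by (simp add: indicator_def)
  also have "\<dots> = (\<integral>\<^sup>+x. emeasure (replicate_pmf n ?U) ?S * indicator {..k} x \<partial>?U)"
  proof (rule nn_integral_cong)
    fix x
    have "(\<lambda>xs. indicator ?S (x#xs) :: ennreal) = (\<lambda>xs. indicator {..k} x * indicator ?S xs)"
      by (auto simp: indicator_def)
    then show "(\<integral>\<^sup>+xs. indicator ?S (x#xs) \<partial>replicate_pmf n ?U) = emeasure (replicate_pmf n ?U) ?S * indicator {..k} x"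
      by (simp add: nn_integral_cmult mult.commute)
  qed
  also have "\<dots> = emeasure (replicate_pmf n ?U) ?S * emeasure ?U {..k}"
    by (simp add: nn_integral_cmult_indicator)
  also have "emeasure ?U {..k} = ennreal (real k / real M)"
  proof -
    have "emeasure ?U {..k} = ennreal (real (min M k) / real M)" using emeasure_pmf_of_set[OF ne, of "{..k}"] by simp
    then show ?thesis using assms by (simp add: min_absorb2)
  qed
  finally show ?case using Suc by (simp add: ennreal_mult[symmetric])
qed

lemma prob_all_le_real:
  assumes "k \<le> M" "M \<ge> 1"
  shows "measure (replicate_pmf n (pmf_of_set {1..M})) {xs. \<forall>x\<in>set xs. x \<le> k}
         = (real k / real M)^n"
  using prob_all_le[OF assms, of n]
  by (simp add: measure_pmf.emeasure_eq_measure)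

lemma pmf_order:
  assumes G: "G \<ge> 1" and M: "M \<ge> 1" and i: "i \<in> {1..M}"
  shows "pmf (map_pmf (\<lambda>xs. Max (set xs)) (replicate_pmf G (pmf_of_set {1..M}))) i
         = (real i ^ G - real (i-1) ^ G) / real M ^ G"
proof -
  let ?R = "replicate_pmf G (pmf_of_set {1..M::nat})"
  let ?S = "\<lambda>k. {xs. \<forall>x\<in>set xs. x \<le> (k::nat)}"
  have ne: "{1..M} \<noteq> {}" using M by auto
  have supp: "set_pmf ?R = {xs\<in>lists {1..M}. length xs = G}"
    using ne by (simp add: set_replicate_pmf)
  have "pmf (map_pmf (\<lambda>xs. Max (set xs)) ?R) i = measure ?R {xs. Max (set xs) = i}"
    by (simp add: pmf_map vimage_def)
  also have "\<dots> = measure ?R ({xs. Max (set xs) = i} \<inter> set_pmf ?R)"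
    by (simp add: measure_Int_set_pmf)
  also have "{xs. Max (set xs) = i} \<inter> set_pmf ?R = (?S i - ?S (i-1)) \<inter> set_pmf ?R"
  proof -
    have "Max (set xs) = i \<longleftrightarrow> xs \<in> ?S i - ?S (i-1)" if "xs \<noteq> []" for xs
    proof -
      have "Max (set xs) = i \<longleftrightarrow> Max (set xs) \<le> i \<and> \<not> Max (set xs) \<le> i - 1"
        using i by auto
      also have "\<dots> \<longleftrightarrow> xs \<in> ?S i - ?S (i-1)"
        using that by (simp add: Max_le_iff)
      finally show ?thesis .
    qed
    moreover have "xs \<in> set_pmf ?R \<Longrightarrow> xs \<noteq> []" for xs using supp G by auto
    ultimately show ?thesis by blast
  qed
  also have "measure ?R ((?S i - ?S (i-1)) \<inter> set_pmf ?R) = measure ?R (?S i - ?S (i-1))"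
    by (simp add: measure_Int_set_pmf)
  also have "\<dots> = measure ?R (?S i) - measure ?R (?S (i-1))"
    by (rule measure_pmf.finite_measure_Diff) auto
  also have "\<dots> = (real i / real M)^G - (real (i-1) / real M)^G"
    using prob_all_le_real[of i M G] prob_all_le_real[of "i-1" M G] i M by auto
  also have "\<dots> = (real i ^ G - real (i-1) ^ G) / real M ^ G"
    by (simp add: power_divide diff_divide_distrib)
  finally show ?thesis .
qed



lemma inner_H:
  assumes i: "i \<in> {1..M}" and p: "0 < p i" "p i < 1" and a: "a \<noteq> i"
  shows "(\<integral>\<^sup>+H. ennreal (real (fs_next M s a H i)) \<partial>Pi_pmf {1..M} False (\<lambda>i. bernoulli_pmf (p i)))
         = ennreal ((1 - p i) * (real (s i) + 1))"
proof -
  let ?Hd = "Pi_pmf {1..M} False (\<lambda>i. bernoulli_pmf (p i))"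
  let ?g = "\<lambda>b. ennreal (if b then 0 else real (s i) + 1)"
  have "(\<integral>\<^sup>+H. ennreal (real (fs_next M s a H i)) \<partial>?Hd) = (\<integral>\<^sup>+H. ?g (H i) \<partial>?Hd)"
    using i a by (intro nn_integral_cong) (auto simp: fs_next_def)
  also have "\<dots> = (\<integral>\<^sup>+b. ?g b \<partial>map_pmf (\<lambda>H. H i) ?Hd)" by simp
  also have "map_pmf (\<lambda>H. H i) ?Hd = bernoulli_pmf (p i)"
    using i by (simp add: Pi_pmf_component)
  also have "(\<integral>\<^sup>+b. ?g b \<partial>bernoulli_pmf (p i)) = ennreal ((1 - p i) * (real (s i) + 1))"
    using p by (simp add: ennreal_mult ennreal_plus mult.commute)
  finally show ?thesis .
qed

lemma inner_A:
  fixes A :: "nat pmf"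
  assumes i: "i \<in> {1..M}" and p: "0 < p i" "p i < 1"
  shows "(\<integral>\<^sup>+a. \<integral>\<^sup>+H. ennreal (real (fs_next M s a H i)) \<partial>Pi_pmf {1..M} False (\<lambda>i. bernoulli_pmf (p i)) \<partial>A)
         = ennreal ((1 - pmf A i) * (1 - p i) * (real (s i) + 1))"
proof -
  let ?Hd = "Pi_pmf {1..M} False (\<lambda>i. bernoulli_pmf (p i))"
  let ?K = "ennreal ((1 - p i) * (real (s i) + 1))"
  have "(\<integral>\<^sup>+a. \<integral>\<^sup>+H. ennreal (real (fs_next M s a H i)) \<partial>?Hd \<partial>A)
        = (\<integral>\<^sup>+a. ?K * indicator (UNIV - {i}) a \<partial>A)"
  proof (rule nn_integral_cong)
    fix a
    show "(\<integral>\<^sup>+H. ennreal (real (fs_next M s a H i)) \<partial>?Hd) = ?K * indicator (UNIV - {i}) a"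
    proof (cases "a = i")
      case True
      then show ?thesis using i by (simp add: fs_next_def)
    next
      case False
      then show ?thesis using inner_H[where p=p, OF i p False] by simp
    qed
  qed
  also have "\<dots> = ?K * emeasure A (UNIV - {i})"
    by (simp add: nn_integral_cmult_indicator)
  also have "emeasure A (UNIV - {i}) = ennreal (1 - pmf A i)"
    using measure_pmf.prob_compl[of "{i}" A]
    by (simp add: measure_pmf.emeasure_eq_measure measure_pmf_single)
  also have "?K * ennreal (1 - pmf A i) = ennreal ((1 - pmf A i) * (1 - p i) * (real (s i) + 1))"
    using p by (simp add: ennreal_mult[symmetric] pmf_le_1 mult_ac)
  finally show ?thesis .
qed

lemma expect_rec:
  fixes A :: "nat pmf"
  assumes i: "i \<in> {1..M}" and p: "0 < p i" "p i < 1"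
  defines "c \<equiv> (1 - pmf A i) * (1 - p i)"
  shows "(\<integral>\<^sup>+s. ennreal (real (s i)) \<partial>fs_state_dist M p (\<lambda>_. A) t)
         = ennreal (c / (1 - c) * (1 - c ^ t))"
proof (induction t)
  case 0
  then show ?case by simp
next
  case (Suc t)
  let ?D = "fs_state_dist M p (\<lambda>_. A) t"
  have c0: "0 \<le> c" and c1: "c < 1"
    using p pmf_le_1[of A i] unfolding c_def
    by (auto intro!: mult_nonneg_nonneg) (smt (verit) mult_left_le_one_le pmf_nonneg)
  have "(\<integral>\<^sup>+s. ennreal (real (s i)) \<partial>fs_state_dist M p (\<lambda>_. A) (Suc t))
        = (\<integral>\<^sup>+s. \<integral>\<^sup>+a. \<integral>\<^sup>+H. ennreal (real (fs_next M s a H i)) \<partial>Pi_pmf {1..M} False (\<lambda>i. bernoulli_pmf (p i)) \<partial>A \<partial>?D)"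
    by simp
  also have "\<dots> = (\<integral>\<^sup>+s. ennreal c * (ennreal (real (s i)) + 1) \<partial>?D)"
    using inner_A[where p=p and A=A, OF i p] c0 unfolding c_def
    by (simp add: ennreal_mult ennreal_plus)
  also have "\<dots> = ennreal c * ((\<integral>\<^sup>+s. ennreal (real (s i)) \<partial>?D) + 1)"
    by (simp add: nn_integral_cmult nn_integral_add)
  also have "\<dots> = ennreal c * (ennreal (c / (1 - c) * (1 - c ^ t)) + 1)"
    using Suc by simp
  also have "\<dots> = ennreal (c * (c / (1 - c) * (1 - c ^ t) + 1))"
    using c0 c1 by (simp add: ennreal_mult ennreal_plus power_le_one)
  also have "c * (c / (1 - c) * (1 - c ^ t) + 1) = c / (1 - c) * (1 - c ^ Suc t)"
    using c1 by (simp add: field_simps)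
  finally show ?case .
qed



lemma expect_cost:
  fixes A :: "nat pmf"
  assumes phi: "\<forall>i\<in>{1..M}. 0 \<le> phi i" and p: "\<forall>i\<in>{1..M}. 0 < p i \<and> p i < 1"
  shows "measure_pmf.expectation (fs_state_dist M p (\<lambda>_. A) t) (fs_cost M phi)
     = (\<Sum>i=1..M. phi i * (((1 - pmf A i) * (1 - p i)) / (1 - (1 - pmf A i) * (1 - p i))
                             * (1 - ((1 - pmf A i) * (1 - p i)) ^ t)))"
    (is "_ = (\<Sum>i=1..M. phi i * ?v i)")
proof -
  let ?D = "fs_state_dist M p (\<lambda>_. A) t"
  have v0: "0 \<le> ?v i" if "i \<in> {1..M}" for i
  proof -
    define c where "c = (1 - pmf A i) * (1 - p i)"
    have pi: "0 < p i" "p i < 1" using p that by auto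
    have c0: "0 \<le> c" and c1: "c < 1"
    proof -
      have a: "0 \<le> 1 - pmf A i" "1 - pmf A i \<le> 1" using pmf_le_1[of A i] pmf_nonneg[of A i] by auto
      have b: "0 \<le> 1 - p i" using pi by auto
      show "0 \<le> c" unfolding c_def using a b by simp
      have "c \<le> 1 * (1 - p i)" unfolding c_def by (rule mult_right_mono[OF a(2) b])
      then show "c < 1" using pi by simp
    qed
    have "0 \<le> c / (1 - c) * (1 - c ^ t)"
      using c0 c1 by (simp add: power_le_one)
    then show ?thesis unfolding c_def .
  qed
  have "measure_pmf.expectation ?D (fs_cost M phi) = enn2real (\<integral>\<^sup>+s. ennreal (fs_cost M phi s) \<partial>?D)"
  proof (rule integral_eq_nn_integral)
    show "fs_cost M phi \<in> borel_measurable (measure_pmf ?D)" by simp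
    show "AE x in measure_pmf ?D. 0 \<le> fs_cost M phi x"
      unfolding fs_cost_def using phi by (intro AE_I2 sum_nonneg mult_nonneg_nonneg) auto
  qed
  also have "(\<integral>\<^sup>+s. ennreal (fs_cost M phi s) \<partial>?D)
      = (\<integral>\<^sup>+s. (\<Sum>i\<in>{1..M}. ennreal (phi i) * ennreal (real (s i))) \<partial>?D)"
    unfolding fs_cost_def
  proof (intro nn_integral_cong)
    fix s :: fs_state
    have "(\<Sum>i\<in>{1..M}. ennreal (phi i) * ennreal (real (s i))) = (\<Sum>i\<in>{1..M}. ennreal (phi i * real (s i)))"
      using phi by (intro sum.cong refl) (simp add: ennreal_mult)
    also have "\<dots> = ennreal (\<Sum>i=1..M. phi i * real (s i))"
      using phi by (intro sum_ennreal) auto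
    finally show "ennreal (\<Sum>i=1..M. phi i * real (s i)) = (\<Sum>i\<in>{1..M}. ennreal (phi i) * ennreal (real (s i)))" by simp
  qed
  also have "\<dots> = (\<Sum>i\<in>{1..M}. ennreal (phi i) * (\<integral>\<^sup>+s. ennreal (real (s i)) \<partial>?D))"
    by (simp add: nn_integral_sum nn_integral_cmult)
  also have "\<dots> = (\<Sum>i\<in>{1..M}. ennreal (phi i * ?v i))"
  proof (intro sum.cong refl)
    fix i assume i: "i \<in> {1..M}"
    have pi: "0 < p i" "p i < 1" using p i by auto
    show "ennreal (phi i) * (\<integral>\<^sup>+s. ennreal (real (s i)) \<partial>?D) = ennreal (phi i * ?v i)"
      unfolding expect_rec[where p=p and A=A, OF i pi]
      using phi i v0[OF i] by (metis ennreal_mult)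
  qed
  also have "\<dots> = ennreal (\<Sum>i=1..M. phi i * ?v i)"
    using phi v0 by (intro sum_ennreal) (metis mult_nonneg_nonneg)
  finally have "measure_pmf.expectation ?D (fs_cost M phi) = enn2real (ennreal (\<Sum>i=1..M. phi i * ?v i))" .
  moreover have "0 \<le> (\<Sum>i=1..M. phi i * ?v i)"
    using phi v0 by (intro sum_nonneg) (metis mult_nonneg_nonneg)
  ultimately show ?thesis by simp
qed



lemma cesaro_geom:
  fixes c L :: real
  assumes c: "0 \<le> c" "c < 1"
  shows "(\<lambda>T. (1 / real T) * (\<Sum>t<T. L * (1 - c ^ t))) \<longlonglongrightarrow> L"
proof -
  have ev: "\<forall>\<^sub>F T in sequentially. L - L * (1 / real T) * ((1 - c ^ T) / (1 - c)) = (1 / real T) * (\<Sum>t<T. L * (1 - c ^ t))"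
  proof (rule eventually_sequentiallyI[of 1])
    fix T :: nat assume T: "T \<ge> 1"
    define Y where "Y = (1 - c ^ T) / (1 - c)"
    have "(\<Sum>t<T. L * (1 - c ^ t)) = L * real T - L * (\<Sum>t<T. c ^ t)"
      by (simp add: sum_subtractf sum_distrib_left[symmetric] right_diff_distrib)
    also have "(\<Sum>t<T. c ^ t) = Y"
      using c unfolding Y_def by (simp add: sum_gp_strict)
    finally have s: "(\<Sum>t<T. L * (1 - c ^ t)) = L * real T - L * Y" .
    have "L - L * (1 / real T) * Y = (1 / real T) * (L * real T - L * Y)"
      using T by (simp add: field_simps)
    then show "L - L * (1 / real T) * ((1 - c ^ T) / (1 - c)) = (1 / real T) * (\<Sum>t<T. L * (1 - c ^ t))"
      unfolding s Y_def .
  qed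
  have "(\<lambda>T. L - L * (1 / real T) * ((1 - c ^ T) / (1 - c))) \<longlonglongrightarrow> L - L * 0 * ((1 - 0) / (1 - c))"
    by (intro tendsto_intros lim_1_over_n LIMSEQ_power_zero) (use c in auto)
  then show ?thesis using ev by (simp add: Lim_transform_eventually)
qed

lemma pow_diff_bound:
  fixes x :: real
  assumes "1 \<le> x"
  shows "x ^ Suc n - (x - 1) ^ Suc n \<le> real (Suc n) * x ^ n"
proof (induction n)
  case 0
  then show ?case by simp
next
  case (Suc n)
  have "x ^ Suc (Suc n) - (x - 1) ^ Suc (Suc n) = x * (x ^ Suc n - (x - 1) ^ Suc n) + (x - 1) ^ Suc n"
    by (simp add: algebra_simps)
  also have "\<dots> \<le> x * (real (Suc n) * x ^ n) + x ^ Suc n"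
    using Suc assms by (intro add_mono mult_left_mono power_mono) auto
  also have "\<dots> = real (Suc (Suc n)) * x ^ Suc n"
    by (simp add: algebra_simps)
  finally show ?case .
qed

lemma geom_rev_sum:
  fixes \<sigma> :: real
  assumes "\<sigma> \<noteq> 1"
  shows "(\<Sum>i=1..M. \<sigma> ^ (M - i)) = (1 - \<sigma> ^ M) / (1 - \<sigma>)"
proof -
  have "(1 - \<sigma>) * (\<Sum>i=1..M. \<sigma> ^ (M - i)) = 1 - \<sigma> ^ M"
  proof (induction M)
    case 0
    then show ?case by simp
  next
    case (Suc M)
    have "(\<Sum>i=1..Suc M. \<sigma> ^ (Suc M - i)) = (\<Sum>i=1..M. \<sigma> ^ (Suc M - i)) + 1"
      by (simp add: sum.cl_ivl_Suc)
    also have "(\<Sum>i=1..M. \<sigma> ^ (Suc M - i)) = \<sigma> * (\<Sum>i=1..M. \<sigma> ^ (M - i))"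
      by (simp add: sum_distrib_left Suc_diff_le)
    finally have e: "(\<Sum>i=1..Suc M. \<sigma> ^ (Suc M - i)) = \<sigma> * (\<Sum>i=1..M. \<sigma> ^ (M - i)) + 1" .
    have "\<sigma> * ((1 - \<sigma>) * (\<Sum>i=1..M. \<sigma> ^ (M - i))) = \<sigma> * (1 - \<sigma> ^ M)"
      using Suc by simp
    then show ?case unfolding e by (simp add: algebra_simps)
  qed
  then show ?thesis using assms by (simp add: field_simps)
qed

lemma h_bound:
  fixes p q :: real
  assumes p: "0 < p" "p < 1" and q: "0 \<le> q"
  shows "\<bar>(1 - q) * (1 - p) / (1 - (1 - q) * (1 - p)) - (1 - p) / p\<bar> \<le> (1 - p) / p ^ 2 * q"
proof -
  define d where "d = 1 - (1 - q) * (1 - p)"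
  have d: "d = p + q * (1 - p)" unfolding d_def by (simp add: algebra_simps)
  have dp: "p \<le> d" using d p q by simp
  have "(1 - q) * (1 - p) / d - (1 - p) / p = ((1 - q) * (1 - p) * p - (1 - p) * d) / (p * d)"
    using dp p by (simp add: field_simps)
  also have "(1 - q) * (1 - p) * p - (1 - p) * d = - ((1 - p) * q)"
    by (simp add: d algebra_simps)
  finally have "(1 - q) * (1 - p) / d - (1 - p) / p = - ((1 - p) * q / (p * d))" by simp
  then have "\<bar>(1 - q) * (1 - p) / d - (1 - p) / p\<bar> = (1 - p) * q / (p * d)"
    using dp p q by simp
  also have "\<dots> \<le> (1 - p) * q / (p * p)"
    using dp p q by (intro divide_left_mono mult_left_mono mult_nonneg_nonneg) auto
  finally show ?thesis unfolding d_def by (simp add: power2_eq_square)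
qed



lemma part1:
  fixes G M :: nat and phi p :: "nat \<Rightarrow> real"
  assumes G: "G \<ge> 1" and M: "M \<ge> 1" and phi: "\<forall>i\<in>{1..M}. 0 < phi i \<and> phi i \<le> 1"
    and p: "\<forall>i\<in>{1..M}. 0 < p i \<and> p i < 1"
  shows "fs_avg_cost M phi p (order_policy M G) \<longlonglongrightarrow>
              (\<Sum>i=1..M. (let q = (real i ^ G - real (i - 1) ^ G) / real M ^ G in
                  phi i * (1 - q) * (1 - p i) / (1 - (1 - q) * (1 - p i))))"
proof -
  define A where "A = map_pmf (\<lambda>xs. Max (set xs)) (replicate_pmf G (pmf_of_set {1..M}))"
  have pol: "order_policy M G = (\<lambda>_. A)" unfolding order_policy_def A_def ..
  define c where "c i = (1 - pmf A i) * (1 - p i)" for i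
  define L where "L i = c i / (1 - c i)" for i
  have c01: "0 \<le> c i \<and> c i < 1" if "i \<in> {1..M}" for i
  proof -
    have pi: "0 < p i" "p i < 1" using p that by auto
    have a: "0 \<le> 1 - pmf A i" "1 - pmf A i \<le> 1" using pmf_le_1[of A i] pmf_nonneg[of A i] by auto
    have b: "0 \<le> 1 - p i" using pi by auto
    have "0 \<le> c i" unfolding c_def using a b by simp
    moreover have "c i \<le> 1 * (1 - p i)" unfolding c_def by (rule mult_right_mono[OF a(2) b])
    ultimately show ?thesis using pi by simp
  qed
  have phi0: "\<forall>i\<in>{1..M}. 0 \<le> phi i" using phi by auto
  have avg: "fs_avg_cost M phi p (order_policy M G) T
        = (\<Sum>i=1..M. phi i * ((1 / real T) * (\<Sum>t<T. L i * (1 - c i ^ t))))" for T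
  proof -
    have "fs_avg_cost M phi p (order_policy M G) T
        = (1 / real T) * (\<Sum>t<T. \<Sum>i=1..M. phi i * (L i * (1 - c i ^ t)))"
      unfolding fs_avg_cost_def pol expect_cost[OF phi0 p] c_def L_def by simp
    also have "\<dots> = (\<Sum>i=1..M. phi i * ((1 / real T) * (\<Sum>t<T. L i * (1 - c i ^ t))))"
      by (subst sum.swap) (simp add: sum_distrib_left mult_ac)
    finally show ?thesis .
  qed
  have lim: "fs_avg_cost M phi p (order_policy M G) \<longlonglongrightarrow> (\<Sum>i=1..M. phi i * L i)"
    unfolding avg
    by (intro tendsto_sum tendsto_mult_left cesaro_geom) (use c01 in auto)
  have "(\<Sum>i=1..M. phi i * L i) = (\<Sum>i=1..M. (let q = (real i ^ G - real (i - 1) ^ G) / real M ^ G in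
                  phi i * (1 - q) * (1 - p i) / (1 - (1 - q) * (1 - p i))))"
  proof (rule sum.cong[OF refl])
    fix i assume i: "i \<in> {1..M}"
    have "pmf A i = (real i ^ G - real (i - 1) ^ G) / real M ^ G"
      unfolding A_def by (rule pmf_order[OF G M i])
    then show "phi i * L i = (let q = (real i ^ G - real (i - 1) ^ G) / real M ^ G in
                  phi i * (1 - q) * (1 - p i) / (1 - (1 - q) * (1 - p i)))"
      unfolding L_def c_def Let_def by simp
  qed
  then show ?thesis using lim by simp
qed



lemma q_bounds:
  fixes G M i :: nat
  assumes G: "G \<ge> 1" and i: "i \<in> {1..M}"
  shows "0 \<le> (real i ^ G - real (i - 1) ^ G) / real M ^ G"
    and "(real i ^ G - real (i - 1) ^ G) / real M ^ G \<le> real G / real M"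
proof -
  have iM: "1 \<le> i" "i \<le> M" using i by auto
  have ri: "real (i - 1) = real i - 1" using iM by (simp add: of_nat_diff)
  show "0 \<le> (real i ^ G - real (i - 1) ^ G) / real M ^ G"
    using iM by (intro divide_nonneg_nonneg) (auto intro!: power_mono)
  obtain g where g: "G = Suc g" using G by (cases G) auto
  have "real i ^ G - real (i - 1) ^ G \<le> real G * real i ^ g"
    unfolding ri g using iM by (intro pow_diff_bound) auto
  also have "\<dots> \<le> real G * real M ^ g"
    using iM by (intro mult_left_mono power_mono) auto
  finally have num: "real i ^ G - real (i - 1) ^ G \<le> real G * real M ^ g" .
  have Mpos: "0 < real M" using iM by auto
  have "(real i ^ G - real (i - 1) ^ G) / real M ^ G \<le> real G * real M ^ g / real M ^ G"
    using Mpos num by (intro divide_right_mono) auto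
  also have "\<dots> = real G / real M" unfolding g using Mpos by (simp add: field_simps)
  finally show "(real i ^ G - real (i - 1) ^ G) / real M ^ G \<le> real G / real M" .
qed

lemma part2:
  fixes G :: nat and p \<sigma> :: real
  assumes G: "G \<ge> 1" and p: "0 < p" "p < 1" and s: "0 < \<sigma>" "\<sigma> < 1"
  shows "(\<lambda>M. fs_J M (\<lambda>i. \<sigma> ^ (M - i)) (\<lambda>_. p) (order_policy M G))
              \<longlonglongrightarrow> (1 - p) / ((1 - \<sigma>) * p)"
proof -
  define q where "q M i = (real i ^ G - real (i - 1) ^ G) / real M ^ G" for M i :: nat
  define h where "h x = (1 - x) * (1 - p) / (1 - (1 - x) * (1 - p))" for x
  define F where "F M = (\<Sum>i=1..M. \<sigma> ^ (M - i) * h (q M i))" for M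
  define S where "S M = (\<Sum>i=1..M. \<sigma> ^ (M - i))" for M :: nat
  define K where "K = (1 - p) / p ^ 2 * real G / (1 - \<sigma>)"
  have J: "fs_J M (\<lambda>i. \<sigma> ^ (M - i)) (\<lambda>_. p) (order_policy M G) = F M" if M: "M \<ge> 1" for M
  proof -
    have ph: "\<forall>i\<in>{1..M}. 0 < \<sigma> ^ (M - i) \<and> \<sigma> ^ (M - i) \<le> (1::real)"
      using s by (auto intro: power_le_one)
    have "fs_J M (\<lambda>i. \<sigma> ^ (M - i)) (\<lambda>_. p) (order_policy M G) =
          (\<Sum>i=1..M. (let q = (real i ^ G - real (i - 1) ^ G) / real M ^ G in
                  \<sigma> ^ (M - i) * (1 - q) * (1 - p) / (1 - (1 - q) * (1 - p))))"
      unfolding fs_J_def using part1[OF G M ph, of "\<lambda>_. p"] p by (intro limI) auto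
    also have "\<dots> = F M"
      unfolding F_def q_def h_def Let_def by (intro sum.cong refl) simp
    finally show ?thesis .
  qed
  have Sc: "S M = (1 - \<sigma> ^ M) / (1 - \<sigma>)" for M
    unfolding S_def using s by (intro geom_rev_sum) auto
  have S_le: "S M \<le> 1 / (1 - \<sigma>)" for M
    unfolding Sc using s by (intro divide_right_mono) auto
  have err: "\<bar>F M - (1 - p) / p * S M\<bar> \<le> K * (1 / real M)" if M: "M \<ge> 1" for M
  proof -
    have "F M - (1 - p) / p * S M = (\<Sum>i=1..M. \<sigma> ^ (M - i) * (h (q M i) - (1 - p) / p))"
      unfolding F_def S_def by (simp add: sum_distrib_left sum_subtractf right_diff_distrib mult_ac)
    also have "\<bar>\<dots>\<bar> \<le> (\<Sum>i=1..M. \<bar>\<sigma> ^ (M - i) * (h (q M i) - (1 - p) / p)\<bar>)"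
      by (rule sum_abs)
    also have "\<dots> \<le> (\<Sum>i=1..M. \<sigma> ^ (M - i) * ((1 - p) / p ^ 2 * (real G / real M)))"
    proof (rule sum_mono)
      fix i assume i: "i \<in> {1..M}"
      have "\<bar>h (q M i) - (1 - p) / p\<bar> \<le> (1 - p) / p ^ 2 * q M i"
        unfolding h_def using h_bound[OF p q_bounds(1)[OF G i]] q_def by simp
      also have "\<dots> \<le> (1 - p) / p ^ 2 * (real G / real M)"
        using p q_bounds(2)[OF G i] unfolding q_def by (intro mult_left_mono) auto
      finally have "\<sigma> ^ (M - i) * \<bar>h (q M i) - (1 - p) / p\<bar> \<le> \<sigma> ^ (M - i) * ((1 - p) / p ^ 2 * (real G / real M))"
        by (rule mult_left_mono) (use s in simp)
      moreover have "\<bar>\<sigma> ^ (M - i) * (h (q M i) - (1 - p) / p)\<bar> = \<sigma> ^ (M - i) * \<bar>h (q M i) - (1 - p) / p\<bar>"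
        using s by (simp add: abs_mult)
      ultimately show "\<bar>\<sigma> ^ (M - i) * (h (q M i) - (1 - p) / p)\<bar> \<le> \<sigma> ^ (M - i) * ((1 - p) / p ^ 2 * (real G / real M))"
        by simp
    qed
    also have "\<dots> = S M * ((1 - p) / p ^ 2 * (real G / real M))"
      unfolding S_def by (rule sum_distrib_right[symmetric])
    also have "\<dots> \<le> 1 / (1 - \<sigma>) * ((1 - p) / p ^ 2 * (real G / real M))"
      using S_le p by (intro mult_right_mono) auto
    also have "\<dots> = K * (1 / real M)" unfolding K_def by simp
    finally show ?thesis .
  qed
  have e0: "(\<lambda>M. F M - (1 - p) / p * S M) \<longlonglongrightarrow> 0"
  proof (rule Lim_null_comparison)
    show "\<forall>\<^sub>F M in sequentially. norm (F M - (1 - p) / p * S M) \<le> K * (1 / real M)"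
      using err by (intro eventually_sequentiallyI[of 1]) auto
    show "(\<lambda>M. K * (1 / real M)) \<longlonglongrightarrow> 0"
      using tendsto_mult_left[OF lim_1_over_n, of K] by simp
  qed
  have "(\<lambda>M. (1 - p) / p * S M) \<longlonglongrightarrow> (1 - p) / p * ((1 - 0) / (1 - \<sigma>))"
    unfolding Sc using s by (intro tendsto_intros LIMSEQ_power_zero) auto
  from tendsto_add[OF this e0]
  have "F \<longlonglongrightarrow> (1 - p) / p * ((1 - 0) / (1 - \<sigma>)) + 0" by simp
  moreover have "(1 - p) / p * ((1 - 0) / (1 - \<sigma>)) + 0 = (1 - p) / ((1 - \<sigma>) * p)" by simp
  ultimately have "F \<longlonglongrightarrow> (1 - p) / ((1 - \<sigma>) * p)" by (simp add: mult.commute)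
  then show ?thesis
    by (rule Lim_transform_eventually) (use J in \<open>auto intro!: eventually_sequentiallyI[of 1]\<close>)
qed


theorem proposition3:
  fixes G :: nat
  assumes G: "G \<ge> 1"
  shows "(\<forall>(M::nat) (phi::nat \<Rightarrow> real) (p::nat \<Rightarrow> real).
            M \<ge> 1 \<longrightarrow> (\<forall>i\<in>{1..M}. 0 < phi i \<and> phi i \<le> 1) \<longrightarrow>
            (\<forall>i\<in>{1..M}. 0 < p i \<and> p i < 1) \<longrightarrow>
            fs_avg_cost M phi p (order_policy M G) \<longlonglongrightarrow>
              (\<Sum>i=1..M. (let q = (real i ^ G - real (i - 1) ^ G) / real M ^ G in
                  phi i * (1 - q) * (1 - p i) / (1 - (1 - q) * (1 - p i)))))
       \<and> (\<forall>(p::real) (\<sigma>::real). 0 < p \<and> p < 1 \<longrightarrow> 0 < \<sigma> \<and> \<sigma> < 1 \<longrightarrow>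
            (\<lambda>M. fs_J M (\<lambda>i. \<sigma> ^ (M - i)) (\<lambda>_. p) (order_policy M G))
              \<longlonglongrightarrow> (1 - p) / ((1 - \<sigma>) * p))"
  using part1[OF G] part2[OF G] by blast

end
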